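(* Let $K\ge 2$ be a power of two. $K$-way LCP-mergesort, as described in the context, sorts any set $\mathcal S$ of $n$ strings and computes its LCP array $H$ using fewer than $L(H) + n\lceil\log_K n\rceil\log_2 K + n + \lceil\frac{n-1}{K-1}\rceil$ character comparisons, and runs in $O(D+n\log n)$ time.
   Context: Strings are zero-terminated finite sequences over a totally ordered alphabet, ordered lexicographically; $\mathrm{lcp}(s,t)$ is the length of their longest common prefix. For a sorted sequence $s_1\le\dots\le s_n$ its LCP array is $H=(\bot,h_2,\dots,h_n)$, $h_i=\mathrm{lcp}(s_{i-1},s_i)$, and $L(H)=\sum_{i\ge 2}h_i$. The distinguishing prefix size $D$ is the sum over all $s\in\mathcal S$ of the length of the shortest prefix of $s$ that is not a prefix of any other string of $\mathcal S$ ($D\ge L(H)$). $K$-way LCP-merge is the procedure merging $K$ sorted sequences with LCP arrays via an LCP-aware tournament tree: $K$ calls of LCP-Compare to build the tree and $\log_2 K$ calls per output string to replay the leaf-to-root path of the previous winner, where LCP-Compare on $(a,s_a,h_a),(b,s_b,h_b)$ with $h_a=\mathrm{lcp}(p,s_a)$, $h_b=\mathrm{lcp}(p,s_b)$, $p\le s_a,s_b$ decides by the LCPs when $h_a\ne h_b$ (the string with larger LCP is smaller; resulting lcp is $\min(h_a,h_b)$) and otherwise compares characters from position $h_a+1$ on until a mismatch or terminator; it returns the smaller index with its LCP, and the larger index with $\mathrm{lcp}(s_a,s_b)$. Counting convention: each character comparison yielding equality counts one; the final mismatch test counts one; the LCP-only cases count zero. $K$-way LCP-mergesort: a set of size at most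 1 is returned with trivial LCP array; otherwise the input is split into $K$ parts of nearly equal size (some possibly empty when $n<K$), each part is sorted recursively together with its LCP array, and the $K$ results are combined by one $K$-way LCP-merge (used at every level, including when $n<K$). *)

theory Defs
  imports Complex_Main "HOL-Library.Sublist"
begin

text \<open>A string is a finite list over a linearly ordered alphabet; the zero terminator is
implicit (it is smaller than every character). Hence the order on strings is the
lexicographic order in which a proper prefix is smaller: lexordp_eq (non-strict) and
lexordp (strict).\<close>

definition lcp :: "'a list \<Rightarrow> 'a list \<Rightarrow> nat" where
  "lcp s t = length (longest_common_prefix s t)"

text \<open>Zero-terminated version of a string (None plays the terminator).\<close>
definition zt :: "'a list \<Rightarrow> 'a option list" where
  "zt s = map Some s @ [None]"

definition dist_prefix_len :: "'a list set \<Rightarrow> 'a list \<Rightarrow> nat" where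
  "dist_prefix_len S s = (LEAST m. \<forall>t\<in>S. t \<noteq> s \<longrightarrow> \<not> prefix (take m (zt s)) (zt t))"

definition dist_prefix_size :: "'a list set \<Rightarrow> nat" where
  "dist_prefix_size S = (\<Sum>s\<in>S. dist_prefix_len S s)"

text \<open>A sorted sequence with its LCP array, represented as a list of pairs
(s_i, h_i); the first LCP entry is the undefined entry (bottom) and is ignored.\<close>
definition lcp_array_ok :: "('a list \<times> nat) list \<Rightarrow> bool" where
  "lcp_array_ok out = (\<forall>i. 0 < i \<and> i < length out \<longrightarrow>
      snd (out ! i) = lcp (fst (out ! (i - 1))) (fst (out ! i)))"

definition L_H :: "('a list \<times> nat) list \<Rightarrow> nat" where
  "L_H out = sum_list (map snd (drop 1 out))"

definition sorts_with_lcp :: "'a::linorder list set \<Rightarrow> ('a list \<times> nat) list \<Rightarrow> bool" where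
  "sorts_with_lcp S out = (set (map fst out) = S \<and> sorted_wrt ord_class.lexordp (map fst out)
      \<and> lcp_array_ok out)"

text \<open>A candidate is Some (stream index, string, lcp w.r.t. the last output string p),
or None for an exhausted stream (sentinel, larger than everything, compared without
character comparisons).\<close>
type_synonym 'a cand = "(nat \<times> 'a list \<times> nat) option"

text \<open>Returns (winner = smaller, loser = larger with its lcp to the winner,
number of character comparisons).\<close>
fun lcp_compare :: "'a::linorder cand \<Rightarrow> 'a cand \<Rightarrow> 'a cand \<times> 'a cand \<times> nat" where
  "lcp_compare None y = (y, None, 0)"
| "lcp_compare x None = (x, None, 0)"
| "lcp_compare (Some (a, sa, ha)) (Some (b, sb, hb)) =
     (if ha > hb then (Some (a, sa, ha), Some (b, sb, hb), 0)
      else if ha < hb then (Some (b, sb, hb), Some (a, sa, ha), 0)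
      else (let l = lcp sa sb in
            if ord_class.lexordp_eq sa sb then (Some (a, sa, ha), Some (b, sb, l), l - ha + 1)
            else (Some (b, sb, hb), Some (a, sa, l), l - ha + 1)))"

datatype 'a ltree = LLeaf nat | LNode "'a ltree" "'a cand" "'a ltree"

text \<open>Build the tree over the leaves lo ..< lo + 2^d; returns (tree storing losers,
overall winner, character comparisons).\<close>
fun build :: "(nat \<Rightarrow> 'a::linorder cand) \<Rightarrow> nat \<Rightarrow> nat \<Rightarrow> 'a ltree \<times> 'a cand \<times> nat" where
  "build c lo 0 = (LLeaf lo, c lo, 0)"
| "build c lo (Suc d) =
     (let (l, wl, cl) = build c lo d;
          (r, wr, cr) = build c (lo + 2 ^ d) d;
          (w, los, cc) = lcp_compare wl wr
      in (LNode l los r, w, cl + cr + cc))"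

fun replay :: "'a::linorder cand \<Rightarrow> nat \<Rightarrow> nat \<Rightarrow> nat \<Rightarrow> 'a ltree \<Rightarrow> 'a ltree \<times> 'a cand \<times> nat" where
  "replay x i lo (Suc d) (LNode l los r) =
     (if i < lo + 2 ^ d then
        (let (l', w, c) = replay x i lo d l; (w', los', c') = lcp_compare w los
         in (LNode l' los' r, w', c + c'))
      else
        (let (r', w, c) = replay x i (lo + 2 ^ d) d r; (w', los', c') = lcp_compare los w
         in (LNode l los' r', w', c + c')))"
| "replay x i lo _ t = (t, x, 0)"

text \<open>Main loop: output the winner, advance its stream, replay. Returns (output,
character comparisons, number of elementary operations). The first argument is fuel
(the total number of strings).\<close>
fun mloop :: "nat \<Rightarrow> nat \<Rightarrow> ('a::linorder list \<times> nat) list list \<Rightarrow> 'a ltree \<Rightarrow> 'a cand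
    \<Rightarrow> ('a list \<times> nat) list \<times> nat \<times> nat" where
  "mloop 0 d ss t w = ([], 0, 0)"
| "mloop (Suc f) d ss t w =
     (case w of None \<Rightarrow> ([], 0, 0)
      | Some (i, s, h) \<Rightarrow>
         (let (x, ss') = (case ss ! i of [] \<Rightarrow> (None, ss)
                                     | (s', h') # r \<Rightarrow> (Some (i, s', h'), ss[i := r]));
              (t', w', c) = replay x i 0 d t;
              (out, c2, ops) = mloop f d ss' t' w'
          in ((s, h) # out, c + c2, d + 1 + ops)))"

text \<open>K-way LCP-merge with K = 2^d input sequences (given with their LCP arrays; the
first LCP entry of each sequence is ignored and replaced by 0 = lcp with the empty
string).\<close>
definition kmerge :: "nat \<Rightarrow> ('a::linorder list \<times> nat) list list
    \<Rightarrow> ('a list \<times> nat) list \<times> nat \<times> nat" where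
  "kmerge d ss =
     (let heads = (\<lambda>i. if i < length ss then (case ss ! i of [] \<Rightarrow> None
                                                | (s, _) # _ \<Rightarrow> Some (i, s, 0)) else None);
          (t, w, c0) = build heads 0 d;
          (out, c, ops) = mloop (sum_list (map length ss)) d (map tl ss) t w
      in (out, c0 + c, (2 ^ d - 1) + ops))"

definition psize :: "nat \<Rightarrow> nat \<Rightarrow> nat \<Rightarrow> nat" where
  "psize K n j = n div K + (if j < n mod K then 1 else 0)"

definition pstart :: "nat \<Rightarrow> nat \<Rightarrow> nat \<Rightarrow> nat" where
  "pstart K n j = j * (n div K) + min j (n mod K)"

definition split_parts :: "nat \<Rightarrow> 'a list \<Rightarrow> 'a list list" where
  "split_parts K xs =
     map (\<lambda>j. take (psize K (length xs) j) (drop (pstart K (length xs) j) xs)) [0..<K]"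

lemma psize_less:
  assumes "K \<ge> 2" "n \<ge> 2" shows "psize K n j < n"
proof (cases "j < n mod K")
  case True
  then have r: "n mod K \<ge> 1" by simp
  have n: "n = K * (n div K) + n mod K" by simp
  show ?thesis
  proof (cases "n div K = 0")
    case True
    then have "n mod K = n" using n by simp
    then show ?thesis using True \<open>j < n mod K\<close> assms unfolding psize_def by simp
  next
    case False
    have "n div K + 1 \<le> 2 * (n div K)" using False by simp
    also have "\<dots> \<le> K * (n div K)" using assms by simp
    finally have "n div K + 1 \<le> K * (n div K)" .
    then have "n div K + 1 < K * (n div K) + n mod K" using r by linarith
    then show ?thesis using n \<open>j < n mod K\<close> unfolding psize_def by simp
  qed
next
  case False
  have "n div K \<le> n div 2" using assms by (simp add: div_le_mono2)
  also have "\<dots> < n" using assms by simp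
  finally show ?thesis using False unfolding psize_def by simp
qed

lemma split_parts_shorter:
  assumes "K \<ge> 2" "length xs \<ge> 2" "p \<in> set (split_parts K xs)"
  shows "length p < length xs"
  using assms psize_less[OF assms(1,2)] unfolding split_parts_def
  by (auto simp: min_def) (metis le_less_trans psize_less[OF assms(1,2)])

text \<open>Returns (sorted sequence
with LCP array, number of character comparisons, number of other elementary operations:
one per call, one per element for splitting, one per LCP-Compare call, one per output).\<close>
function msort :: "nat \<Rightarrow> 'a::linorder list list \<Rightarrow> ('a list \<times> nat) list \<times> nat \<times> nat" where
  "msort d xs =
     (if length xs \<le> 1 \<or> d = 0 then (map (\<lambda>s. (s, 0)) xs, 0, 1)
      else
        (let rs = map (msort d) (split_parts (2 ^ d) xs);
             (out, c, ops) = kmerge d (map fst rs)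
         in (out, sum_list (map (fst \<circ> snd) rs) + c,
             1 + length xs + sum_list (map (snd \<circ> snd) rs) + ops)))"
  by pat_completeness auto
termination
proof (relation "measure (\<lambda>(d, xs). length xs)")
  show "wf (measure (\<lambda>(d, xs). length xs))" by simp
next
  fix d :: nat and xs :: "'a list list" and p
  assume a: "\<not> (length xs \<le> 1 \<or> d = 0)" "p \<in> set (split_parts (2 ^ d) xs)"
  have "(2::nat) \<le> 2 ^ d" using a(1) by (simp add: self_le_power)
  then have "length p < length xs" using split_parts_shorter a by force
  then show "((d, p), (d, xs)) \<in> measure (\<lambda>(d, xs). length xs)" by simp
qed

definition msort_comparisons :: "nat \<Rightarrow> 'a::linorder list list \<Rightarrow> nat" where
  "msort_comparisons d xs = fst (snd (msort d xs))"

definition msort_time :: "nat \<Rightarrow> 'a::linorder list list \<Rightarrow> nat" where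
  "msort_time d xs = fst (snd (msort d xs)) + snd (snd (msort d xs))"

end

theory Submission
  imports Defs
begin


lemma lcp_simps[simp]:
  "lcp [] ys = 0" "lcp xs [] = 0"
  "lcp (x#xs) (y#ys) = (if x = y then Suc (lcp xs ys) else 0)"
  by (auto simp: lcp_def)

lemma lcp_sym: "lcp a b = lcp b a"
  by (induction a arbitrary: b) (auto, case_tac b, auto)

lemma lcp_ultra: "min (lcp p a) (lcp p b) \<le> lcp a b"
proof (induction p arbitrary: a b)
  case Nil then show ?case by simp
next
  case (Cons x p)
  show ?case by (cases a; cases b; auto simp: Cons)
qed

lemma lcp_lt:
  fixes p a b :: "'a::linorder list"
  assumes "ord_class.lexordp_eq p b" "lcp p b < lcp p a"
  shows "ord_class.lexordp a b \<and> lcp a b = lcp p b"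
  using assms
proof (induction p arbitrary: a b)
  case Nil then show ?case by simp
next
  case (Cons x p)
  then obtain z a' where a: "a = z # a'" "z = x" by (cases a) (auto split: if_splits)
  from Cons obtain y b' where b: "b = y # b'" by (cases b) auto
  show ?case
  proof (cases "y = x")
    case True
    then show ?thesis using Cons a b by auto
  next
    case False
    then show ?thesis using Cons a b by auto
  qed
qed


definition liftp :: "'a list \<Rightarrow> (nat \<times> 'a list) option \<Rightarrow> 'a cand" where
  "liftp p A = map_option (\<lambda>(i,s). (i, s, lcp p s)) A"

fun minopt :: "(nat \<times> 'a::linorder list) option \<Rightarrow> (nat \<times> 'a list) option \<Rightarrow> (nat \<times> 'a list) option" where
  "minopt None y = y"
| "minopt x None = x"
| "minopt (Some (i,a)) (Some (j,b)) = (if ord_class.lexordp_eq a b then Some (i,a) else Some (j,b))"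

fun loser :: "(nat \<times> 'a::linorder list) option \<Rightarrow> (nat \<times> 'a list) option \<Rightarrow> 'a cand" where
  "loser None y = None"
| "loser x None = None"
| "loser (Some (i,a)) (Some (j,b)) = (if ord_class.lexordp_eq a b then Some (j,b,lcp a b) else Some (i,a,lcp a b))"

fun hc :: "'a cand \<Rightarrow> nat" where
  "hc None = 0"
| "hc (Some (i,s,h)) = h"

definition geq_opt :: "'a::linorder list \<Rightarrow> (nat \<times> 'a list) option \<Rightarrow> bool" where
  "geq_opt p A = (\<forall>i a. A = Some (i,a) \<longrightarrow> ord_class.lexordp_eq p a)"

lemma lcp_compare_lift:
  fixes p :: "'a::linorder list"
  assumes "geq_opt p A" "geq_opt p B"
  shows "\<exists>c. lcp_compare (liftp p A) (liftp p B) = (liftp p (minopt A B), loser A B, c) \<and>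
     c + hc (liftp p A) + hc (liftp p B) \<le> (if A \<noteq> None \<and> B \<noteq> None then 1 else 0)
        + hc (liftp p (minopt A B)) + hc (loser A B)"
proof (cases A)
  case None then show ?thesis by (simp add: liftp_def)
next
  case (Some A')
  then obtain i a where A: "A = Some (i,a)" by (cases A') auto
  show ?thesis
  proof (cases B)
    case None then show ?thesis using A by (simp add: liftp_def)
  next
    case (Some B')
    then obtain j b where B: "B = Some (j,b)" by (cases B') auto
    have pa: "ord_class.lexordp_eq p a" and pb: "ord_class.lexordp_eq p b"
      using assms A B by (auto simp: geq_opt_def)
    consider "lcp p a > lcp p b" | "lcp p a < lcp p b" | "lcp p a = lcp p b" by linarith
    then show ?thesis
    proof cases
      case 1
      with lcp_lt[OF pb 1] have "ord_class.lexordp a b" "lcp a b = lcp p b" by auto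
      then show ?thesis using 1 A B by (auto simp: liftp_def lexordp_into_lexordp_eq)
    next
      case 2
      with lcp_lt[OF pa 2] have "ord_class.lexordp b a" "lcp b a = lcp p a" by auto
      then have "\<not> ord_class.lexordp_eq a b" "lcp a b = lcp p a"
        using lcp_sym lexordp_conv_lexordp_eq by metis+
      then show ?thesis using 2 A B by (auto simp: liftp_def)
    next
      case 3
      have "lcp p a \<le> lcp a b" using lcp_ultra[of p a b] 3 by simp
      then show ?thesis using 3 A B by (auto simp: liftp_def Let_def)
    qed
  qed
qed

fun submin :: "(nat \<Rightarrow> 'a::linorder list option) \<Rightarrow> nat \<Rightarrow> nat \<Rightarrow> (nat \<times> 'a list) option" where
  "submin hs lo 0 = map_option (\<lambda>s. (lo, s)) (hs lo)"
| "submin hs lo (Suc d) = minopt (submin hs lo d) (submin hs (lo + 2^d) d)"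

fun canon :: "(nat \<Rightarrow> 'a::linorder list option) \<Rightarrow> nat \<Rightarrow> nat \<Rightarrow> 'a ltree" where
  "canon hs lo 0 = LLeaf lo"
| "canon hs lo (Suc d) = LNode (canon hs lo d) (loser (submin hs lo d) (submin hs (lo + 2^d) d))
      (canon hs (lo + 2^d) d)"

fun phi :: "'a ltree \<Rightarrow> nat" where
  "phi (LLeaf _) = 0"
| "phi (LNode l x r) = phi l + hc x + phi r"

lemma minopt_cases: "minopt A B = A \<or> minopt A B = B"
  by (cases "(A,B)" rule: minopt.cases) auto

lemma minopt_None: "minopt A B = None \<longleftrightarrow> A = None \<and> B = None"
  by (cases "(A,B)" rule: minopt.cases) auto

lemma all_range2:
  fixes lo :: nat
  shows "(\<forall>j. lo \<le> j \<and> j < lo + 2^Suc d \<longrightarrow> P j) \<longleftrightarrow>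
    (\<forall>j. lo \<le> j \<and> j < lo + 2^d \<longrightarrow> P j) \<and> (\<forall>j. lo + 2^d \<le> j \<and> j < lo + 2^d + 2^d \<longrightarrow> P j)"
proof (intro iffI conjI allI impI)
  fix j assume "\<forall>j. lo \<le> j \<and> j < lo + 2^Suc d \<longrightarrow> P j" "lo \<le> j \<and> j < lo + 2^d"
  then show "P j" by simp
next
  fix j assume "\<forall>j. lo \<le> j \<and> j < lo + 2^Suc d \<longrightarrow> P j" "lo + 2^d \<le> j \<and> j < lo + 2^d + 2^d"
  then show "P j" by simp
next
  fix j assume a: "(\<forall>j. lo \<le> j \<and> j < lo + 2^d \<longrightarrow> P j) \<and> (\<forall>j. lo + 2^d \<le> j \<and> j < lo + 2^d + 2^d \<longrightarrow> P j)"
    "lo \<le> j \<and> j < lo + 2^Suc d"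
  show "P j"
  proof (cases "j < lo + 2^d")
    case True then show ?thesis using a by blast
  next
    case False then show ?thesis using a by auto
  qed
qed

lemma submin_None: "submin hs lo d = None \<longleftrightarrow> (\<forall>j. lo \<le> j \<and> j < lo + 2^d \<longrightarrow> hs j = None)"
proof (induction d arbitrary: lo)
  case 0 then show ?case by (auto simp: less_Suc_eq_le dest: le_antisym)
next
  case (Suc d)
  show ?case
    unfolding submin.simps minopt_None Suc all_range2 by simp
qed

lemma submin_Some:
  assumes "submin hs lo d = Some (i, s)"
  shows "lo \<le> i \<and> i < lo + 2^d \<and> hs i = Some s \<and>
    (\<forall>j. lo \<le> j \<and> j < lo + 2^d \<longrightarrow> (\<forall>s'. hs j = Some s' \<longrightarrow> ord_class.lexordp_eq s s'))"
  using assms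
proof (induction d arbitrary: lo i s)
  case 0 then show ?case by (auto simp: lexordp_eq_refl less_Suc_eq_le dest: le_antisym)
next
  case (Suc d)
  let ?L = "submin hs lo d" and ?R = "submin hs (lo + 2^d) d"
  have eq: "minopt ?L ?R = Some (i, s)" using Suc.prems by simp
  show ?case
  proof (cases ?L)
    case None
    then have "?R = Some (i,s)" using eq by simp
    from Suc.IH[OF this] None submin_None[of hs lo d] show ?thesis
      unfolding all_range2 by auto
  next
    case (Some l)
    then obtain i1 a where L: "?L = Some (i1, a)" by (cases l) auto
    note IL = Suc.IH[OF L]
    show ?thesis
    proof (cases ?R)
      case None
      then have "i = i1" "s = a" using eq L by auto
      with IL None submin_None[of hs "lo + 2^d" d] show ?thesis
        unfolding all_range2 by auto
    next
      case (Some r)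
      then obtain i2 b where R: "?R = Some (i2, b)" by (cases r) auto
      note IR = Suc.IH[OF R]
      show ?thesis
      proof (cases "ord_class.lexordp_eq a b")
        case True
        then have "i = i1" "s = a" using eq L R by auto
        with IL IR True show ?thesis
          unfolding all_range2 by (auto intro: lexordp_eq_trans)
      next
        case False
        then have "i = i2" "s = b" using eq L R by auto
        moreover have "ord_class.lexordp_eq b a" using False lexordp_eq_linear by blast
        ultimately show ?thesis using IL IR
          unfolding all_range2 by (auto intro: lexordp_eq_trans)
      qed
    qed
  qed
qed

lemma submin_cong:
  "(\<And>j. lo \<le> j \<Longrightarrow> j < lo + 2^d \<Longrightarrow> hs j = hs2 j) \<Longrightarrow> submin hs lo d = submin hs2 lo d"
proof (induction d arbitrary: lo)
  case 0 then show ?case by simp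
next
  case (Suc d)
  have "submin hs lo d = submin hs2 lo d" by (rule Suc.IH) (use Suc.prems in auto)
  moreover have "submin hs (lo + 2^d) d = submin hs2 (lo + 2^d) d" by (rule Suc.IH) (use Suc.prems in auto)
  ultimately show ?case by simp
qed

lemma canon_cong:
  "(\<And>j. lo \<le> j \<Longrightarrow> j < lo + 2^d \<Longrightarrow> hs j = hs2 j) \<Longrightarrow> canon hs lo d = canon hs2 lo d"
proof (induction d arbitrary: lo)
  case 0 then show ?case by simp
next
  case (Suc d)
  have "canon hs lo d = canon hs2 lo d" by (rule Suc.IH) (use Suc.prems in auto)
  moreover have "canon hs (lo + 2^d) d = canon hs2 (lo + 2^d) d" by (rule Suc.IH) (use Suc.prems in auto)
  moreover have "submin hs lo d = submin hs2 lo d" by (rule submin_cong) (use Suc.prems in auto)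
  moreover have "submin hs (lo + 2^d) d = submin hs2 (lo + 2^d) d" by (rule submin_cong) (use Suc.prems in auto)
  ultimately show ?case by simp
qed

lemma phi_canon_None:
  "(\<And>j. lo \<le> j \<Longrightarrow> j < lo + 2^d \<Longrightarrow> hs j = None) \<Longrightarrow> phi (canon hs lo d) = 0"
proof (induction d arbitrary: lo)
  case 0 then show ?case by simp
next
  case (Suc d)
  have "submin hs lo d = None" using submin_None[of hs lo d] Suc.prems by auto
  then show ?case using Suc.IH Suc.prems by auto
qed


lemma hc_liftp_Nil[simp]: "hc (liftp [] A) = 0"
  by (cases A) (auto simp: liftp_def)

lemma geq_opt_Nil[simp]: "geq_opt [] A"
  by (simp add: geq_opt_def)

lemma build_canon:
  assumes "\<forall>j. lo \<le> j \<and> j < lo + 2^d \<longrightarrow> c j = liftp [] (submin hs j 0)"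
  shows "\<exists>cb. build c lo d = (canon hs lo d, liftp [] (submin hs lo d), cb) \<and>
    cb + (if submin hs lo d = None then 0 else 1)
      \<le> (\<Sum>j=lo..<lo+2^d. if hs j = None then 0 else 1) + phi (canon hs lo d)"
  using assms
proof (induction d arbitrary: lo)
  case 0
  then show ?case by auto
next
  case (Suc d)
  let ?m = "lo + 2^d"
  have "\<forall>j. lo \<le> j \<and> j < lo + 2^d \<longrightarrow> c j = liftp [] (submin hs j 0)" using Suc.prems by auto
  from Suc.IH[OF this] obtain cl where L: "build c lo d = (canon hs lo d, liftp [] (submin hs lo d), cl)"
    "cl + (if submin hs lo d = None then 0 else 1)
      \<le> (\<Sum>j=lo..<lo+2^d. if hs j = None then 0 else 1) + phi (canon hs lo d)" by blast
  have "\<forall>j. ?m \<le> j \<and> j < ?m + 2^d \<longrightarrow> c j = liftp [] (submin hs j 0)" using Suc.prems by auto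
  from Suc.IH[OF this] obtain cr where R: "build c ?m d = (canon hs ?m d, liftp [] (submin hs ?m d), cr)"
    "cr + (if submin hs ?m d = None then 0 else 1)
      \<le> (\<Sum>j=?m..<?m+2^d. if hs j = None then 0 else 1) + phi (canon hs ?m d)" by blast
  from lcp_compare_lift[of "[]" "submin hs lo d" "submin hs ?m d"] obtain cc where
    C: "lcp_compare (liftp [] (submin hs lo d)) (liftp [] (submin hs ?m d))
       = (liftp [] (minopt (submin hs lo d) (submin hs ?m d)), loser (submin hs lo d) (submin hs ?m d), cc)"
    "cc \<le> (if submin hs lo d \<noteq> None \<and> submin hs ?m d \<noteq> None then 1 else 0)
          + hc (loser (submin hs lo d) (submin hs ?m d))" by auto
  have S: "(\<Sum>j=lo..<lo+2^Suc d. if hs j = None then 0 else 1) =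
     (\<Sum>j=lo..<?m. if hs j = None then (0::nat) else 1) + (\<Sum>j=?m..<?m+2^d. if hs j = None then 0 else 1)"
    by (subst sum.atLeastLessThan_concat[symmetric]) (auto simp: mult_2 add.assoc)
  have B: "build c lo (Suc d) = (canon hs lo (Suc d), liftp [] (submin hs lo (Suc d)), cl + cr + cc)"
    using L(1) R(1) C(1) by (simp add: Let_def)
  have ph: "phi (canon hs lo (Suc d)) = phi (canon hs lo d) + hc (loser (submin hs lo d) (submin hs ?m d)) + phi (canon hs ?m d)"
    by simp
  have ind: "(if submin hs lo (Suc d) = None then 0 else 1) + (if submin hs lo d \<noteq> None \<and> submin hs ?m d \<noteq> None then 1 else 0)
     = (if submin hs lo d = None then 0 else 1) + (if submin hs ?m d = None then 0 else (1::nat))"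
    by (simp add: minopt_None)
  show ?case
    apply (rule exI[of _ "cl + cr + cc"])
    apply (rule conjI[OF B])
    using L(2) R(2) C(2) S ph ind by linarith
qed

lemma replay_canon:
  fixes s :: "'a::linorder list"
  assumes "submin hs lo d = Some (i, s)"
    and "\<forall>j a. lo \<le> j \<and> j < lo + 2^d \<and> hs2 j = Some a \<longrightarrow> ord_class.lexordp_eq s a"
    and "\<forall>j. j \<noteq> i \<longrightarrow> hs2 j = hs j"
  shows "\<exists>c. replay (liftp s (submin hs2 i 0)) i lo d (canon hs lo d)
      = (canon hs2 lo d, liftp s (submin hs2 lo d), c) \<and>
     c + phi (canon hs lo d) + hc (liftp s (submin hs2 i 0))
       \<le> d + phi (canon hs2 lo d) + hc (liftp s (submin hs2 lo d))"
  using assms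
proof (induction d arbitrary: lo)
  case 0
  then have "i = lo" using submin_Some[OF 0(1)] by auto
  then show ?case by simp
next
  case (Suc d)
  let ?m = "lo + 2^d"
  let ?x = "liftp s (submin hs2 i 0)"
  have geqL: "geq_opt s (submin hs2 lo d)"
    unfolding geq_opt_def
  proof (intro allI impI)
    fix j a assume "submin hs2 lo d = Some (j, a)"
    then have "lo \<le> j \<and> j < lo + 2^d \<and> hs2 j = Some a" using submin_Some by blast
    then show "ord_class.lexordp_eq s a" using Suc.prems(2)[rule_format, of j a] by auto
  qed
  have geqR: "geq_opt s (submin hs2 ?m d)"
    unfolding geq_opt_def
  proof (intro allI impI)
    fix j a assume "submin hs2 ?m d = Some (j, a)"
    then have "?m \<le> j \<and> j < ?m + 2^d \<and> hs2 j = Some a" using submin_Some by blast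
    then show "ord_class.lexordp_eq s a" using Suc.prems(2)[rule_format, of j a] by auto
  qed
  have i_rng: "lo \<le> i \<and> i < lo + 2^Suc d" using submin_Some[OF Suc.prems(1)] by blast
  show ?case
  proof (cases "i < ?m")
    case True
    have Rc: "submin hs2 ?m d = submin hs ?m d" "canon hs2 ?m d = canon hs ?m d"
      using Suc.prems(3) True by (auto intro!: submin_cong canon_cong)
    have mo: "minopt (submin hs lo d) (submin hs ?m d) = Some (i, s)" using Suc.prems(1) by simp
    have Lm: "submin hs lo d = Some (i, s)"
    proof -
      have "submin hs ?m d \<noteq> Some (i, s)" using submin_Some[of hs ?m d i s] True by auto
      then show ?thesis using mo minopt_cases by metis
    qed
    have los: "loser (submin hs lo d) (submin hs ?m d) = liftp s (submin hs ?m d)"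
    proof (cases "submin hs ?m d")
      case None then show ?thesis using Lm by (simp add: liftp_def)
    next
      case (Some r)
      then obtain j b where R: "submin hs ?m d = Some (j, b)" by (cases r) auto
      then have "j \<ge> ?m" using submin_Some[OF R] by blast
      then have "ord_class.lexordp_eq s b" using mo Lm R True by (auto split: if_splits)
      then show ?thesis using Lm R by (simp add: liftp_def)
    qed
    have "\<forall>j a. lo \<le> j \<and> j < lo + 2^d \<and> hs2 j = Some a \<longrightarrow> ord_class.lexordp_eq s a"
    proof (intro allI impI)
      fix j a assume "lo \<le> j \<and> j < lo + 2^d \<and> hs2 j = Some a"
      then show "ord_class.lexordp_eq s a" using Suc.prems(2)[rule_format, of j a] by auto
    qed
    from Suc.IH[OF Lm this Suc.prems(3)] obtain c1 where
      IH: "replay ?x i lo d (canon hs lo d) = (canon hs2 lo d, liftp s (submin hs2 lo d), c1)"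
      "c1 + phi (canon hs lo d) + hc ?x \<le> d + phi (canon hs2 lo d) + hc (liftp s (submin hs2 lo d))"
      by blast
    from lcp_compare_lift[OF geqL geqR] obtain cc where
      C: "lcp_compare (liftp s (submin hs2 lo d)) (liftp s (submin hs2 ?m d))
       = (liftp s (minopt (submin hs2 lo d) (submin hs2 ?m d)), loser (submin hs2 lo d) (submin hs2 ?m d), cc)"
      "cc + hc (liftp s (submin hs2 lo d)) + hc (liftp s (submin hs2 ?m d))
         \<le> (if submin hs2 lo d \<noteq> None \<and> submin hs2 ?m d \<noteq> None then 1 else 0)
          + hc (liftp s (minopt (submin hs2 lo d) (submin hs2 ?m d))) + hc (loser (submin hs2 lo d) (submin hs2 ?m d))"
      by blast
    have B: "replay ?x i lo (Suc d) (canon hs lo (Suc d)) = (canon hs2 lo (Suc d), liftp s (submin hs2 lo (Suc d)), c1 + cc)"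
      using IH(1) C(1) True los Rc by (simp add: Let_def)
    have ph: "phi (canon hs lo (Suc d)) = phi (canon hs lo d) + hc (liftp s (submin hs2 ?m d)) + phi (canon hs ?m d)"
      using los Rc by simp
    have ph2: "phi (canon hs2 lo (Suc d)) = phi (canon hs2 lo d) + hc (loser (submin hs2 lo d) (submin hs2 ?m d)) + phi (canon hs ?m d)"
      using Rc by simp
    have "(if submin hs2 lo d \<noteq> None \<and> submin hs2 ?m d \<noteq> None then 1 else 0) \<le> (1::nat)" by simp
    then show ?thesis
      apply -
      apply (rule exI[of _ "c1 + cc"])
      apply (rule conjI[OF B])
      using IH(2) C(2) ph ph2 by simp
  next
    case False
    have Lc: "submin hs2 lo d = submin hs lo d" "canon hs2 lo d = canon hs lo d"
      using Suc.prems(3) False by (auto intro!: submin_cong canon_cong)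
    have mo: "minopt (submin hs lo d) (submin hs ?m d) = Some (i, s)" using Suc.prems(1) by simp
    have Rm: "submin hs ?m d = Some (i, s)"
    proof -
      have "submin hs lo d \<noteq> Some (i, s)" using submin_Some[of hs lo d i s] False by auto
      then show ?thesis using mo minopt_cases by metis
    qed
    have los: "loser (submin hs lo d) (submin hs ?m d) = liftp s (submin hs lo d)"
    proof (cases "submin hs lo d")
      case None then show ?thesis by (simp add: liftp_def)
    next
      case (Some r)
      then obtain j a where L: "submin hs lo d = Some (j, a)" by (cases r) auto
      then have "j < ?m" using submin_Some[OF L] by simp
      then have "\<not> ord_class.lexordp_eq a s" using mo Rm L False by (auto split: if_splits)
      then show ?thesis using Rm L by (simp add: liftp_def lcp_sym)
    qed
    have "\<forall>j a. ?m \<le> j \<and> j < ?m + 2^d \<and> hs2 j = Some a \<longrightarrow> ord_class.lexordp_eq s a"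
    proof (intro allI impI)
      fix j a assume "?m \<le> j \<and> j < ?m + 2^d \<and> hs2 j = Some a"
      then show "ord_class.lexordp_eq s a" using Suc.prems(2)[rule_format, of j a] by auto
    qed
    from Suc.IH[OF Rm this Suc.prems(3)] obtain c1 where
      IH: "replay ?x i ?m d (canon hs ?m d) = (canon hs2 ?m d, liftp s (submin hs2 ?m d), c1)"
      "c1 + phi (canon hs ?m d) + hc ?x \<le> d + phi (canon hs2 ?m d) + hc (liftp s (submin hs2 ?m d))"
      by blast
    from lcp_compare_lift[OF geqL geqR] obtain cc where
      C: "lcp_compare (liftp s (submin hs2 lo d)) (liftp s (submin hs2 ?m d))
       = (liftp s (minopt (submin hs2 lo d) (submin hs2 ?m d)), loser (submin hs2 lo d) (submin hs2 ?m d), cc)"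
      "cc + hc (liftp s (submin hs2 lo d)) + hc (liftp s (submin hs2 ?m d))
         \<le> (if submin hs2 lo d \<noteq> None \<and> submin hs2 ?m d \<noteq> None then 1 else 0)
          + hc (liftp s (minopt (submin hs2 lo d) (submin hs2 ?m d))) + hc (loser (submin hs2 lo d) (submin hs2 ?m d))"
      by blast
    have B: "replay ?x i lo (Suc d) (canon hs lo (Suc d)) = (canon hs2 lo (Suc d), liftp s (submin hs2 lo (Suc d)), c1 + cc)"
      using IH(1) C(1) False los Lc by (simp add: Let_def)
    have ph: "phi (canon hs lo (Suc d)) = phi (canon hs lo d) + hc (liftp s (submin hs2 lo d)) + phi (canon hs ?m d)"
      using los Lc by simp
    have ph2: "phi (canon hs2 lo (Suc d)) = phi (canon hs lo d) + hc (loser (submin hs2 lo d) (submin hs2 ?m d)) + phi (canon hs2 ?m d)"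
      using Lc by simp
    have "(if submin hs2 lo d \<noteq> None \<and> submin hs2 ?m d \<noteq> None then 1 else 0) \<le> (1::nat)" by simp
    then show ?thesis
      apply -
      apply (rule exI[of _ "c1 + cc"])
      apply (rule conjI[OF B])
      using IH(2) C(2) ph ph2 by simp
  qed
qed




fun lchain :: "'a::linorder list \<Rightarrow> ('a list \<times> nat) list \<Rightarrow> bool" where
  "lchain p [] = True"
| "lchain p ((s,h)#r) = (h = lcp p s \<and> ord_class.lexordp p s \<and> lchain s r)"

fun ochain :: "'a::linorder list \<Rightarrow> ('a list \<times> nat) list \<Rightarrow> bool" where
  "ochain p [] = True"
| "ochain p ((s,h)#r) = (h = lcp p s \<and> ord_class.lexordp_eq p s \<and> lchain s r)"

lemma lchain_less: "lchain p r \<Longrightarrow> x \<in> fst ` set r \<Longrightarrow> ord_class.lexordp p x"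
proof (induction r arbitrary: p)
  case Nil then show ?case by simp
next
  case (Cons a r)
  obtain s h where a: "a = (s,h)" by (cases a)
  show ?case using Cons a by (auto intro: lexordp_trans)
qed

lemma ochain_lchain:
  "ochain s out \<Longrightarrow> (\<forall>x\<in>fst ` set out. x \<noteq> s) \<Longrightarrow> lchain s out"
  by (cases out) (auto simp: lexordp_eq_conv_lexord)

definition strm :: "(nat \<Rightarrow> 'a list option) \<Rightarrow> ('a list \<times> nat) list list \<Rightarrow> nat \<Rightarrow> 'a list set" where
  "strm hs ss j = set_option (hs j) \<union> fst ` set (ss ! j)"

definition rem :: "nat \<Rightarrow> (nat \<Rightarrow> 'a list option) \<Rightarrow> ('a list \<times> nat) list list \<Rightarrow> 'a list set" where
  "rem d hs ss = (\<Union>j<2^d. strm hs ss j)"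

definition fuel :: "nat \<Rightarrow> (nat \<Rightarrow> 'a list option) \<Rightarrow> ('a list \<times> nat) list list \<Rightarrow> nat" where
  "fuel d hs ss = (\<Sum>j<2^d. (if hs j = None then 0 else 1) + length (ss ! j))"

definition lsum :: "nat \<Rightarrow> ('a list \<times> nat) list list \<Rightarrow> nat" where
  "lsum d ss = (\<Sum>j<2^d. sum_list (map snd (ss ! j)))"

definition minv :: "nat \<Rightarrow> 'a::linorder list \<Rightarrow> (nat \<Rightarrow> 'a list option) \<Rightarrow> ('a list \<times> nat) list list \<Rightarrow> bool" where
  "minv d p hs ss \<longleftrightarrow> length ss = 2^d \<and>
     (\<forall>j<2^d. hs j = None \<longrightarrow> ss ! j = []) \<and>
     (\<forall>j<2^d. \<forall>a. hs j = Some a \<longrightarrow> lchain a (ss ! j) \<and> ord_class.lexordp_eq p a) \<and>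
     (\<forall>j<2^d. \<forall>k<2^d. j \<noteq> k \<longrightarrow> strm hs ss j \<inter> strm hs ss k = {})"

lemma sum_update_one:
  fixes g g2 :: "nat \<Rightarrow> nat"
  assumes "i < n" "\<forall>j. j \<noteq> i \<longrightarrow> g2 j = g j" "g i = g2 i + e"
  shows "(\<Sum>j<n. g j) = (\<Sum>j<n. g2 j) + e"
proof -
  have "(\<Sum>j<n. g j) = g i + (\<Sum>j\<in>{..<n} - {i}. g j)" using assms(1) by (simp add: sum.remove)
  moreover have "(\<Sum>j<n. g2 j) = g2 i + (\<Sum>j\<in>{..<n} - {i}. g2 j)" using assms(1) by (simp add: sum.remove)
  moreover have "(\<Sum>j\<in>{..<n} - {i}. g j) = (\<Sum>j\<in>{..<n} - {i}. g2 j)" using assms(2) by (intro sum.cong) auto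
  ultimately show ?thesis using assms(3) by simp
qed

lemma mloop_correct:
  assumes "minv d p hs ss" "f = fuel d hs ss"
    and "mloop f d ss (canon hs 0 d) (liftp p (submin hs 0 d)) = (out, c, ops)"
  shows "set (map fst out) = rem d hs ss \<and> ochain p out \<and> length out = f \<and> ops = f * (d + 1) \<and>
     c + phi (canon hs 0 d) + hc (liftp p (submin hs 0 d)) + lsum d ss \<le> d * f + sum_list (map snd out)"
  using assms
proof (induction f arbitrary: p hs ss out c ops)
  case 0
  have hsN: "\<forall>j<2^d. hs j = None" and ssN: "\<forall>j<2^d. ss ! j = []"
    using 0 unfolding fuel_def by (auto split: if_splits)
  then have sm: "submin hs 0 d = None" by (simp add: submin_None)
  have "phi (canon hs 0 d) = 0" using hsN by (intro phi_canon_None) auto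
  moreover have "rem d hs ss = {}" using hsN ssN by (auto simp: rem_def strm_def)
  moreover have "lsum d ss = 0" using ssN by (simp add: lsum_def)
  ultimately show ?case using 0 sm by (auto simp: liftp_def)
next
  case (Suc f)
  note inv = Suc.prems(1)[unfolded minv_def]
  have "\<exists>j<2^d. hs j \<noteq> None"
  proof (rule ccontr)
    assume "\<not> ?thesis"
    then have "fuel d hs ss = 0" using inv unfolding fuel_def by auto
    then show False using Suc.prems(2) by simp
  qed
  then have "submin hs 0 d \<noteq> None" using submin_None[of hs 0 d] by auto
  then obtain i s where sm: "submin hs 0 d = Some (i, s)" by auto
  note smi = submin_Some[OF sm]
  have iK: "i < 2^d" and hsi: "hs i = Some s" using smi by auto
  have lenss: "length ss = 2^d" using inv by simp
  have chi: "lchain s (ss ! i)" and psi: "ord_class.lexordp_eq p s" using inv iK hsi by auto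
  have smin: "\<forall>x\<in>rem d hs ss. ord_class.lexordp_eq s x"
  proof
    fix x assume "x \<in> rem d hs ss"
    then obtain j where j: "j < 2^d" "x \<in> strm hs ss j" by (auto simp: rem_def)
    show "ord_class.lexordp_eq s x"
    proof (cases "hs j")
      case None
      then show ?thesis using j inv by (auto simp: strm_def)
    next
      case (Some a)
      have sa: "ord_class.lexordp_eq s a" using smi j Some by auto
      have "lchain a (ss ! j)" using inv j Some by auto
      then have "x = a \<or> ord_class.lexordp a x" using j Some lchain_less[of a "ss ! j" x] by (auto simp: strm_def)
      then show ?thesis using sa by (auto intro: lexordp_eq_trans lexordp_into_lexordp_eq)
    qed
  qed
  define x where "x = (case ss ! i of [] \<Rightarrow> None | (s', h') # r \<Rightarrow> Some (i, s', h'))"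
  define ss2 where "ss2 = (case ss ! i of [] \<Rightarrow> ss | (s', h') # r \<Rightarrow> ss[i := r])"
  define hs2 where "hs2 = hs(i := (case ss ! i of [] \<Rightarrow> None | (s', h') # r \<Rightarrow> Some s'))"
  have xl: "x = liftp s (submin hs2 i 0)"
    using chi unfolding x_def hs2_def by (cases "ss ! i") (auto simp: liftp_def)
  have hs2o: "\<forall>j. j \<noteq> i \<longrightarrow> hs2 j = hs j" by (simp add: hs2_def)
  have ss2o: "\<forall>j. j \<noteq> i \<longrightarrow> ss2 ! j = ss ! j" by (cases "ss ! i") (auto simp: ss2_def)
  have len2: "length ss2 = 2^d" using inv by (cases "ss ! i") (auto simp: ss2_def)
  have geq2: "\<forall>j a. 0 \<le> j \<and> j < 0 + 2^d \<and> hs2 j = Some a \<longrightarrow> ord_class.lexordp_eq s a"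
  proof (intro allI impI)
    fix j a assume a: "0 \<le> j \<and> j < 0 + 2^d \<and> hs2 j = Some a"
    show "ord_class.lexordp_eq s a"
    proof (cases "j = i")
      case True
      then show ?thesis using a chi unfolding hs2_def
        by (cases "ss ! i") (auto intro: lexordp_into_lexordp_eq)
    next
      case False
      then show ?thesis using a smi hs2o by auto
    qed
  qed
  from replay_canon[OF sm geq2 hs2o] obtain c1 where
    R: "replay x i 0 d (canon hs 0 d) = (canon hs2 0 d, liftp s (submin hs2 0 d), c1)"
       "c1 + phi (canon hs 0 d) + hc x \<le> d + phi (canon hs2 0 d) + hc (liftp s (submin hs2 0 d))"
    unfolding xl by blast
  have strm2: "\<forall>j<2^d. strm hs ss j = (if j = i then insert s (strm hs2 ss2 j) else strm hs2 ss2 j)"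
    using hsi lenss iK by (cases "ss ! i") (auto simp: strm_def hs2_def ss2_def)
  have rem2: "rem d hs ss = insert s (rem d hs2 ss2)"
    unfolding rem_def using strm2 iK by auto
  have inv2: "minv d s hs2 ss2"
    unfolding minv_def
  proof (intro conjI allI impI)
    show "length ss2 = 2^d" by (fact len2)
  next
    fix j :: nat assume "j < 2^d" "hs2 j = None"
    then show "ss2 ! j = []" using inv hs2o ss2o unfolding ss2_def hs2_def
      by (cases "j = i"; cases "ss ! i") auto
  next
    fix j :: nat and a assume "j < 2^d" "hs2 j = Some a"
    then show "lchain a (ss2 ! j)" using inv hs2o ss2o chi len2 unfolding ss2_def hs2_def
      by (cases "j = i"; cases "ss ! i") auto
  next
    fix j :: nat and a assume "j < 2^d" "hs2 j = Some a"
    then show "ord_class.lexordp_eq s a" using geq2 by auto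
  next
    fix j k :: nat assume jk: "j < 2^d" "k < 2^d" "j \<noteq> k"
    have "strm hs2 ss2 j \<subseteq> strm hs ss j" "strm hs2 ss2 k \<subseteq> strm hs ss k"
      using strm2 jk by (auto split: if_splits)
    then show "strm hs2 ss2 j \<inter> strm hs2 ss2 k = {}" using inv jk by blast
  qed
  have fuel2: "fuel d hs ss = fuel d hs2 ss2 + 1"
    unfolding fuel_def
    by (rule sum_update_one[OF iK]) (use hsi hs2o ss2o lenss iK in \<open>auto simp: hs2_def ss2_def split: list.splits\<close>)
  then have f2: "f = fuel d hs2 ss2" using Suc.prems(2) by simp
  have lsum2: "lsum d ss = lsum d ss2 + hc x"
    unfolding lsum_def
    by (rule sum_update_one[OF iK]) (use ss2o lenss iK in \<open>auto simp: x_def ss2_def split: list.splits\<close>)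
  obtain out2 c2 ops2 where M: "mloop f d ss2 (canon hs2 0 d) (liftp s (submin hs2 0 d)) = (out2, c2, ops2)"
    by (metis prod_cases3)
  note IH = Suc.IH[OF inv2 f2 M]
  have mstep: "mloop (Suc f) d ss (canon hs 0 d) (liftp p (submin hs 0 d)) = ((s, lcp p s) # out2, c1 + c2, d + 1 + ops2)"
    using R(1) M sm unfolding x_def ss2_def
    by (cases "ss ! i") (auto simp: liftp_def Let_def)
  have outeq: "out = (s, lcp p s) # out2" "c = c1 + c2" "ops = d + 1 + ops2"
    using mstep Suc.prems(3) by auto
  have snot: "\<forall>y\<in>fst ` set out2. y \<noteq> s"
  proof
    fix y assume y: "y \<in> fst ` set out2"
    then have "y \<in> rem d hs2 ss2" using IH by auto
    then obtain j where j: "j < 2^d" "y \<in> strm hs2 ss2 j" by (auto simp: rem_def)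
    show "y \<noteq> s"
    proof (cases "j = i")
      case False
      have "s \<in> strm hs ss i" using hsi by (simp add: strm_def)
      moreover have "y \<in> strm hs ss j" using j strm2 False by auto
      ultimately show ?thesis using inv j iK False by blast
    next
      case True
      then have "y \<in> fst ` set (ss ! i)" using j lenss iK by (cases "ss ! i") (auto simp: strm_def hs2_def ss2_def)
      then have "ord_class.lexordp s y" using lchain_less[OF chi] by blast
      then show ?thesis using lexordp_irreflexive' by blast
    qed
  qed
  have "lchain s out2" using ochain_lchain IH snot by blast
  then have oc: "ochain p out" using outeq psi by simp
  show ?case using IH outeq oc rem2 R(2) lsum2 sm by (auto simp: liftp_def)
qed


definition good :: "('a::linorder list \<times> nat) list \<Rightarrow> bool" where
  "good l = (case l of [] \<Rightarrow> True | (s, _) # r \<Rightarrow> lchain s r)"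

lemma ochain_Nil_sum: "ochain [] out \<Longrightarrow> sum_list (map snd out) = L_H out"
  by (cases out) (auto simp: L_H_def)

lemma kmerge_correct:
  fixes ss :: "('a::linorder list \<times> nat) list list"
  assumes len: "length ss = 2^d"
    and gd: "\<forall>j<2^d. good (ss ! j)"
    and dj: "\<forall>j<2^d. \<forall>k<2^d. j \<noteq> k \<longrightarrow> fst ` set (ss ! j) \<inter> fst ` set (ss ! k) = {}"
    and km: "kmerge d ss = (out, c, ops)"
  shows "set (map fst out) = (\<Union>j<2^d. fst ` set (ss ! j)) \<and> ochain [] out
     \<and> length out = (\<Sum>j<2^d. length (ss ! j))
     \<and> ops = 2^d - 1 + (\<Sum>j<2^d. length (ss ! j)) * (d + 1)
     \<and> c + (\<Sum>j<2^d. L_H (ss ! j)) + (if (\<Sum>j<2^d. length (ss ! j)) = 0 then 0 else 1)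
        \<le> L_H out + d * (\<Sum>j<2^d. length (ss ! j)) + (\<Sum>j<2^d. if ss ! j = [] then 0 else 1)"
proof -
  define hs where "hs = (\<lambda>i. if i < length ss then (case ss ! i of [] \<Rightarrow> None | (s, _) # _ \<Rightarrow> Some s) else None)"
  define heads :: "nat \<Rightarrow> 'a cand" where "heads = (\<lambda>i. if i < length ss then (case ss ! i of [] \<Rightarrow> None
                                                | (s, _) # _ \<Rightarrow> Some (i, s, 0)) else None)"
  define n where "n = (\<Sum>j<2^d. length (ss ! j))"
  have hd_eq: "\<forall>j. 0 \<le> j \<and> j < 0 + 2^d \<longrightarrow> heads j = liftp [] (submin hs j 0)"
    unfolding heads_def hs_def by (auto simp: liftp_def split: list.splits)
  from build_canon[OF hd_eq] obtain cb where
    B: "build heads 0 d = (canon hs 0 d, liftp [] (submin hs 0 d), cb)"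
       "cb + (if submin hs 0 d = None then 0 else 1)
        \<le> (\<Sum>j=0..<0+2^d. if hs j = None then 0 else 1) + phi (canon hs 0 d)" by blast
  have sl: "sum_list (map length ss) = n"
    unfolding n_def using len by (simp add: sum_list_sum_nth atLeast0LessThan)
  have strm_eq: "\<forall>j<2^d. strm hs (map tl ss) j = fst ` set (ss ! j)"
    using len by (auto simp: strm_def hs_def split: list.splits)
  have inv: "minv d [] hs (map tl ss)"
    unfolding minv_def
  proof (intro conjI allI impI)
    show "length (map tl ss) = 2^d" using len by simp
  next
    fix j :: nat assume "j < 2^d" "hs j = None"
    then show "map tl ss ! j = []" using len by (auto simp: hs_def split: list.splits)
  next
    fix j :: nat and a assume "j < 2^d" "hs j = Some a"
    then show "lchain a (map tl ss ! j)" using len gd by (auto simp: hs_def good_def split: list.splits)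
  next
    fix j :: nat and a assume "j < 2^d" "hs j = Some a"
    then show "ord_class.lexordp_eq [] a" by simp
  next
    fix j k :: nat assume "j < 2^d" "k < 2^d" "j \<noteq> k"
    then show "strm hs (map tl ss) j \<inter> strm hs (map tl ss) k = {}" using strm_eq dj by simp
  qed
  have fu: "fuel d hs (map tl ss) = n"
    unfolding fuel_def n_def using len by (intro sum.cong) (auto simp: hs_def split: list.splits)
  obtain out2 cm ops2 where M: "mloop n d (map tl ss) (canon hs 0 d) (liftp [] (submin hs 0 d)) = (out2, cm, ops2)"
    by (metis prod_cases3)
  note MC = mloop_correct[OF inv fu[symmetric] M]
  have keq: "kmerge d ss = (out2, cb + cm, 2^d - 1 + ops2)"
    unfolding kmerge_def using B(1) M sl heads_def by (simp add: Let_def)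
  have o: "out = out2" "c = cb + cm" "ops = 2^d - 1 + ops2" using keq km by auto
  have rem_eq: "rem d hs (map tl ss) = (\<Union>j<2^d. fst ` set (ss ! j))"
    unfolding rem_def using strm_eq by auto
  have ls: "lsum d (map tl ss) = (\<Sum>j<2^d. L_H (ss ! j))"
    unfolding lsum_def L_H_def using len by (intro sum.cong) (auto simp: drop_Suc)
  have cnt: "(\<Sum>j=0..<0+2^d. if hs j = None then 0 else 1) = (\<Sum>j<2^d. if ss ! j = [] then 0 else (1::nat))"
    using len by (auto simp: atLeast0LessThan hs_def split: list.splits intro!: sum.cong)
  have sN: "(submin hs 0 d = None) = (n = 0)"
  proof -
    have "(submin hs 0 d = None) = (\<forall>j<2^d. hs j = None)" by (simp add: submin_None)
    also have "\<dots> = (\<forall>j<2^d. ss ! j = [])"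
    proof -
      have "\<And>j. j < 2^d \<Longrightarrow> (hs j = None) = (ss ! j = [])"
        using len by (case_tac "ss ! j") (auto simp: hs_def)
      then show ?thesis by auto
    qed
    also have "\<dots> = (n = 0)" unfolding n_def by auto
    finally show ?thesis .
  qed
  have "sum_list (map snd out2) = L_H out2" using MC ochain_Nil_sum by blast
  then show ?thesis using MC o rem_eq ls cnt sN B(2) unfolding n_def by auto
qed




lemma pstart_Suc: "pstart K n (Suc j) = pstart K n j + psize K n j"
  unfolding pstart_def psize_def by (auto simp: min_def)

lemma pstart_K: assumes "K > 0" shows "pstart K n K = n"
proof -
  have "n mod K < K" using assms by simp
  then show ?thesis unfolding pstart_def by (simp add: min_def mult.commute)
qed



lemma concat_parts_aux:
  assumes "K > 0" "m \<le> K"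
  shows "concat (map (\<lambda>j. take (psize K (length xs) j) (drop (pstart K (length xs) j) xs)) [0..<m])
    = take (pstart K (length xs) m) xs"
  using assms(2)
proof (induction m)
  case 0 then show ?case by (simp add: pstart_def)
next
  case (Suc m)
  then show ?case by (simp add: pstart_Suc take_add)
qed

lemma concat_split_parts: "K > 0 \<Longrightarrow> concat (split_parts K xs) = xs"
  unfolding split_parts_def using concat_parts_aux[of K K xs] by (simp add: pstart_K)

lemma length_split_parts[simp]: "length (split_parts K xs) = K"
  by (simp add: split_parts_def)

lemma nth_split_parts: "j < K \<Longrightarrow> split_parts K xs ! j = take (psize K (length xs) j) (drop (pstart K (length xs) j) xs)"
  by (simp add: split_parts_def)

lemma pstart_le: "j \<le> K \<Longrightarrow> K > 0 \<Longrightarrow> pstart K n j \<le> n"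
proof -
  assume a: "j \<le> K" "K > 0"
  have "pstart K n j \<le> pstart K n K"
    unfolding pstart_def using a by (intro add_mono mult_le_mono1) auto
  then show ?thesis using pstart_K[OF a(2)] by simp
qed

lemma length_part: assumes "j < K" shows "length (split_parts K xs ! j) = psize K (length xs) j"
proof -
  have "pstart K (length xs) (Suc j) \<le> length xs" using assms by (intro pstart_le) auto
  then show ?thesis using assms by (simp add: nth_split_parts pstart_Suc)
qed

lemma distinct_concat_nth:
  "distinct (concat L) \<Longrightarrow> i < length L \<Longrightarrow> j < length L \<Longrightarrow> i \<noteq> j \<Longrightarrow> set (L ! i) \<inter> set (L ! j) = {}"
proof (induction L arbitrary: i j)
  case Nil then show ?case by simp
next
  case (Cons x L)
  show ?case
  proof (cases i)
    case 0
    then obtain j' where j': "j = Suc j'" "j' < length L" using Cons by (cases j) auto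
    have m: "L ! j' \<in> set L" using j'(2) by simp
    have "set x \<inter> set (L ! j') = {}" using Cons.prems(1) m by auto
    then show ?thesis using 0 j'(1) by simp
  next
    case (Suc i')
    show ?thesis
    proof (cases j)
      case 0
      have i': "i' < length L" using Cons.prems Suc by simp
      have m: "L ! i' \<in> set L" using i' by simp
      have "set x \<inter> set (L ! i') = {}" using Cons.prems(1) m by auto
      then show ?thesis using 0 Suc by auto
    next
      case (Suc j') then show ?thesis using Cons \<open>i = Suc i'\<close> by auto
    qed
  qed
qed

lemma psize_pos: assumes "K \<ge> 2" "n \<ge> 2" "j < 2" shows "psize K n j \<ge> 1"
proof (cases "n < K")
  case True
  then have "n mod K = n" by simp
  then show ?thesis using assms unfolding psize_def by auto
next
  case False
  then have "n div K \<ge> 1" using assms by (simp add: div_greater_zero_iff Suc_le_eq)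
  then show ?thesis unfolding psize_def by simp
qed

lemma psize_le_pow:
  assumes "K \<ge> 1" "n \<le> K ^ Suc k"
  shows "psize K n j \<le> K ^ k"
proof (cases "n mod K = 0")
  case True
  have "n div K \<le> K ^ Suc k div K" by (rule div_le_mono[OF assms(2)])
  then show ?thesis using True assms(1) unfolding psize_def by simp
next
  case False
  have "n \<noteq> K ^ Suc k" using False by auto
  then have "n < K * K ^ k" using assms(2) by simp
  then have "n div K < K ^ k" using assms(1) by (simp add: div_less_iff_less_mult mult.commute)
  then show ?thesis unfolding psize_def by simp
qed


definition msprop :: "nat \<Rightarrow> 'a::linorder list list \<Rightarrow> bool" where
  "msprop d xs = (let out = fst (msort d xs); c = fst (snd (msort d xs)); ops = snd (snd (msort d xs));
      n = length xs in
   set (map fst out) = set xs \<and> length out = n \<and> ochain [] out \<and> (n = 0 \<longrightarrow> c = 0 \<and> ops = 1) \<and>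
   (\<forall>k. 1 \<le> n \<longrightarrow> n \<le> (2^d)^k \<longrightarrow>
       c + 1 \<le> L_H out + d*n*k + n \<and> ops + 2*2^d \<le> (d+2)*n*k + 4*2^d*n))"

lemma distinct_concat_mem: "distinct (concat L) \<Longrightarrow> l \<in> set L \<Longrightarrow> distinct l"
  by (induction L) auto

lemma good_ochain: "ochain [] out \<Longrightarrow> good out"
  by (cases out) (auto simp: good_def)

lemma sum_two_le:
  fixes g :: "nat \<Rightarrow> nat"
  assumes "K \<ge> 2" shows "g 0 + g 1 \<le> (\<Sum>j<K. g j)"
proof -
  have "sum g {0, 1} \<le> sum g {..<K}" using assms by (intro sum_mono2) auto
  then show ?thesis by simp
qed

lemma msort_prop:
  assumes "d \<ge> 1" "distinct xs"
  shows "msprop d xs"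
  using assms
proof (induction d xs rule: msort.induct)
  case (1 d xs)
  show ?case
  proof (cases "length xs \<le> 1")
    case True
    then have ms: "msort d xs = (map (\<lambda>s. (s, 0)) xs, 0, 1)" by (subst msort.simps) simp
    show ?thesis
    proof (cases xs)
      case Nil then show ?thesis using ms by (simp add: msprop_def)
    next
      case (Cons s r)
      then have "xs = [s]" using True by simp
      have p1: "(1::nat) \<le> 2^d" by simp
      then show ?thesis using ms \<open>xs = [s]\<close> by (auto simp: msprop_def L_H_def Suc_le_eq)
    qed
  next
    case False
    define K where "K = (2::nat)^d"
    define n where "n = length xs"
    define P where "P = split_parts K xs"
    define rs where "rs = map (msort d) P"
    have K2: "K \<ge> 2" using 1(2) unfolding K_def by (simp add: self_le_power)
    have n2: "n \<ge> 2" using False n_def by simp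
    have lenP: "length P = K" by (simp add: P_def)
    have catP: "concat P = xs" using K2 by (simp add: P_def concat_split_parts)
    obtain outm cm opsm where KM: "kmerge d (map fst rs) = (outm, cm, opsm)" by (metis prod_cases3)
    have ms: "msort d xs = (outm, sum_list (map (fst \<circ> snd) rs) + cm, 1 + n + sum_list (map (snd \<circ> snd) rs) + opsm)"
      using False 1(2) KM unfolding rs_def P_def K_def n_def
      by (subst msort.simps) (simp add: Let_def del: msort.simps)
    have dP: "\<And>j. j < K \<Longrightarrow> distinct (P ! j)"
      using 1(3) catP lenP by (metis distinct_concat_mem nth_mem)
    have IHj: "\<And>j. j < K \<Longrightarrow> msprop d (P ! j)"
    proof -
      fix j assume j: "j < K"
      have "P ! j \<in> set (split_parts (2^d) xs)" using j lenP by (simp add: P_def K_def)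
      then show "msprop d (P ! j)" using 1(1)[of "P ! j"] False 1(2) dP[OF j] by simp
    qed
    define oj where "oj = (\<lambda>j. fst (msort d (P ! j)))"
    define cj where "cj = (\<lambda>j. fst (snd (msort d (P ! j))))"
    define pj where "pj = (\<lambda>j. snd (snd (msort d (P ! j))))"
    define nj where "nj = (\<lambda>j. length (P ! j))"
    have ssj: "\<And>j. j < K \<Longrightarrow> map fst rs ! j = oj j" using lenP by (simp add: rs_def oj_def)
    have IP: "\<And>j. j < K \<Longrightarrow> set (map fst (oj j)) = set (P ! j) \<and> length (oj j) = nj j \<and> ochain [] (oj j)
       \<and> (nj j = 0 \<longrightarrow> cj j = 0 \<and> pj j = 1) \<and>
       (\<forall>k. 1 \<le> nj j \<longrightarrow> nj j \<le> (2^d)^k \<longrightarrow>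
       cj j + 1 \<le> L_H (oj j) + d * nj j * k + nj j \<and> pj j + 2*2^d \<le> (d+2) * nj j * k + 4*2^d * nj j)"
      using IHj unfolding msprop_def oj_def cj_def pj_def nj_def Let_def by blast
    have lrs: "length (map fst rs) = 2^d" using lenP by (simp add: rs_def K_def)
    have gd: "\<forall>j<2^d. good (map fst rs ! j)"
    proof (intro allI impI)
      fix j :: nat assume "j < 2^d"
      then have jK: "j < K" by (simp add: K_def)
      have "ochain [] (oj j)" using IP[OF jK] by blast
      then show "good (map fst rs ! j)" using ssj[OF jK] good_ochain by simp
    qed
    have dj: "\<forall>j<2^d. \<forall>k<2^d. j \<noteq> k \<longrightarrow> fst ` set (map fst rs ! j) \<inter> fst ` set (map fst rs ! k) = {}"
    proof (intro allI impI)
      fix j k :: nat assume a: "j < 2^d" "k < 2^d" "j \<noteq> k"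
      have jK: "j < K" "k < K" using a by (simp_all add: K_def)
      have "distinct (concat P)" using 1(3) catP by simp
      then have "set (P ! j) \<inter> set (P ! k) = {}" using distinct_concat_nth[of P j k] lenP jK a(3) by simp
      moreover have "fst ` set (map fst rs ! j) = set (P ! j)"
      proof -
        have e: "set (map fst (oj j)) = set (P ! j)" using IP[OF jK(1)] by blast
        show ?thesis using e ssj[OF jK(1)] by simp
      qed
      moreover have "fst ` set (map fst rs ! k) = set (P ! k)"
      proof -
        have e: "set (map fst (oj k)) = set (P ! k)" using IP[OF jK(2)] by blast
        show ?thesis using e ssj[OF jK(2)] by simp
      qed
      ultimately show "fst ` set (map fst rs ! j) \<inter> fst ` set (map fst rs ! k) = {}" by simp
    qed
    note KC = kmerge_correct[OF lrs gd dj KM]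
    have sumn: "(\<Sum>j<K. nj j) = n"
    proof -
      have "n = length (concat P)" using catP n_def by simp
      also have "\<dots> = (\<Sum>j<K. nj j)" using lenP
        by (simp add: length_concat sum_list_sum_nth atLeast0LessThan nj_def)
      finally show ?thesis by simp
    qed
    have setx: "set xs = (\<Union>j<K. set (P ! j))"
    proof -
      have "set xs = set (concat P)" using catP by simp
      also have "\<dots> = (\<Union>l\<in>set P. set l)" by simp
      also have "\<dots> = (\<Union>j<K. set (P ! j))"
      proof
        show "(\<Union>l\<in>set P. set l) \<subseteq> (\<Union>j<K. set (P ! j))"
        proof
          fix x assume "x \<in> (\<Union>l\<in>set P. set l)"
          then obtain l where "l \<in> set P" "x \<in> set l" by blast
          then obtain j where "j < length P" "P ! j = l" by (auto simp: in_set_conv_nth)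
          then show "x \<in> (\<Union>j<K. set (P ! j))" using \<open>x \<in> set l\<close> lenP by auto
        qed
      next
        show "(\<Union>j<K. set (P ! j)) \<subseteq> (\<Union>l\<in>set P. set l)" using lenP nth_mem[of _ P] by blast
      qed
      finally show ?thesis .
    qed
    have lenoj: "\<And>j. j < K \<Longrightarrow> length (map fst rs ! j) = nj j" using IP ssj by metis
    have lenm: "(\<Sum>j<2^d. length (map fst rs ! j)) = n"
      using sumn lenoj unfolding K_def by simp
    have cntm: "(\<Sum>j<2^d. if map fst rs ! j = [] then 0 else (1::nat)) = (\<Sum>j<K. if nj j = 0 then 0 else 1)"
      unfolding K_def
    proof (intro sum.cong refl)
      fix j assume "j \<in> {..<(2::nat)^d}"
      then have "length (map fst rs ! j) = nj j" using lenoj K_def by simp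
      then show "(if map fst rs ! j = [] then 0 else (1::nat)) = (if nj j = 0 then 0 else 1)" by (metis length_0_conv)
    qed
    have LHm: "(\<Sum>j<2^d. L_H (map fst rs ! j)) = (\<Sum>j<K. L_H (oj j))"
      unfolding K_def using ssj K_def by (intro sum.cong) auto
    have csum: "sum_list (map (fst \<circ> snd) rs) = (\<Sum>j<K. cj j)"
      using lenP by (simp add: rs_def sum_list_sum_nth atLeast0LessThan cj_def)
    have psum: "sum_list (map (snd \<circ> snd) rs) = (\<Sum>j<K. pj j)"
      using lenP by (simp add: rs_def sum_list_sum_nth atLeast0LessThan pj_def)
    have cnt2: "2 \<le> (\<Sum>j<K. if nj j = 0 then 0 else (1::nat))"
    proof -
      have "nj 0 \<ge> 1" "nj 1 \<ge> 1"
        using psize_pos[OF K2 n2, of 0] psize_pos[OF K2 n2, of 1] length_part[of 0 K xs] length_part[of 1 K xs] K2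
        unfolding nj_def P_def n_def by auto
      then show ?thesis using sum_two_le[OF K2, of "\<lambda>j. if nj j = 0 then 0 else (1::nat)"] by simp
    qed
    have main: "\<forall>k. 1 \<le> n \<longrightarrow> n \<le> (2^d)^k \<longrightarrow>
       cj' + 1 \<le> L_H outm + d*n*k + n \<and> ops' + 2*2^d \<le> (d+2)*n*k + 4*2^d*n"
      if cdef: "cj' = (\<Sum>j<K. cj j) + cm" and odef: "ops' = 1 + n + (\<Sum>j<K. pj j) + opsm" for cj' ops'
    proof (intro allI impI)
      fix k assume k: "1 \<le> n" "n \<le> (2^d)^k"
      have "k \<noteq> 0" using k n2 by (cases k) auto
      then obtain k' where kk: "k = Suc k'" by (cases k) auto
      have njle: "\<And>j. j < K \<Longrightarrow> nj j \<le> (2^d)^k'"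
        using psize_le_pow[of K n k'] k kk K2 length_part[of _ K xs] unfolding nj_def P_def n_def K_def
        by auto
      have cb: "\<And>j. j < K \<Longrightarrow> cj j + (if nj j = 0 then 0 else 1) \<le> L_H (oj j) + (d * k') * nj j + nj j"
      proof -
        fix j assume j: "j < K"
        show "cj j + (if nj j = 0 then 0 else 1) \<le> L_H (oj j) + (d * k') * nj j + nj j"
        proof (cases "nj j = 0")
          case True then show ?thesis using IP[OF j] by simp
        next
          case False then show ?thesis using IP[OF j] njle[OF j] by (auto simp: mult.commute mult.left_commute)
        qed
      qed
      have pb: "\<And>j. j < K \<Longrightarrow> pj j + (2*K) * (if nj j = 0 then 0 else 1) \<le> ((d+2) * k' + 4*K) * nj j + 1"
      proof -
        fix j assume j: "j < K"
        show "pj j + (2*K) * (if nj j = 0 then 0 else 1) \<le> ((d+2) * k' + 4*K) * nj j + 1"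
        proof (cases "nj j = 0")
          case True then show ?thesis using IP[OF j] by simp
        next
          case False then show ?thesis using IP[OF j] njle[OF j] unfolding K_def
            by (auto simp: algebra_simps)
        qed
      qed
      have S1: "(\<Sum>j<K. cj j) + (\<Sum>j<K. if nj j = 0 then 0 else 1) \<le> (\<Sum>j<K. L_H (oj j)) + (d * k') * n + n"
      proof -
        have "(\<Sum>j<K. cj j + (if nj j = 0 then 0 else 1)) \<le> (\<Sum>j<K. L_H (oj j) + (d * k') * nj j + nj j)"
          by (rule sum_mono) (use cb in auto)
        moreover have "(\<Sum>j<K. (d * k') * nj j) = (d * k') * n" by (simp add: sum_distrib_left[symmetric] sumn)
        ultimately show ?thesis by (simp add: sum.distrib sumn)
      qed
      have S2: "(\<Sum>j<K. pj j) + (2*K) * (\<Sum>j<K. if nj j = 0 then 0 else 1) \<le> ((d+2) * k' + 4*K) * n + K"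
      proof -
        have "(\<Sum>j<K. pj j + (2*K) * (if nj j = 0 then 0 else 1)) \<le> (\<Sum>j<K. ((d+2) * k' + 4*K) * nj j + 1)"
          by (rule sum_mono) (use pb in auto)
        moreover have "(\<Sum>j<K. ((d+2) * k' + 4*K) * nj j) = ((d+2) * k' + 4*K) * n"
          by (simp only: sum_distrib_left[symmetric] sumn)
        moreover have "(\<Sum>j<K. (2*K) * (if nj j = 0 then 0 else (1::nat))) = (2*K) * (\<Sum>j<K. if nj j = 0 then 0 else 1)"
          by (simp only: sum_distrib_left[symmetric])
        ultimately show ?thesis by (simp only: sum.distrib) simp
      qed
      have KCc: "cm + (\<Sum>j<K. L_H (oj j)) + 1 \<le> L_H outm + d * n + (\<Sum>j<K. if nj j = 0 then 0 else 1)"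
        using KC lenm cntm LHm n2 by auto
      have KCo: "opsm = K - 1 + n * (d + 1)" using KC lenm K_def by simp
      have e1: "d * n * k = d * k' * n + d * n" using kk by (simp add: algebra_simps)
      have e2: "(d+2) * n * k = (d+2) * k' * n + (d+2) * n" using kk by (simp add: algebra_simps)
      have e3: "((d+2) * k' + 4*K) * n = (d+2) * k' * n + 4*K*n" by (simp add: algebra_simps)
      have e4: "(2*K) * (\<Sum>j<K. if nj j = 0 then 0 else 1) \<ge> 4 * K" using cnt2 by simp
      have e5: "n * (d + 1) = d * n + n" "(d+2) * n = d * n + 2 * n" by (simp_all add: algebra_simps)
      define X where "X = (\<Sum>j<K. if nj j = 0 then 0 else (1::nat))"
      define SC where "SC = (\<Sum>j<K. cj j)"
      define SP where "SP = (\<Sum>j<K. pj j)"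
      define SL where "SL = (\<Sum>j<K. L_H (oj j))"
      have S1': "SC + X \<le> SL + d * k' * n + n" using S1 unfolding X_def SC_def SL_def .
      have KCc': "cm + SL + 1 \<le> L_H outm + d * n + X" using KCc unfolding X_def SL_def .
      have S2': "SP + (2*K) * X \<le> ((d+2) * k' + 4*K) * n + K" using S2 unfolding X_def SP_def .
      have e4': "(2*K) * X \<ge> 4 * K" using e4 unfolding X_def .
      have cdef': "cj' = SC + cm" using cdef unfolding SC_def .
      have odef': "ops' = 1 + n + SP + opsm" using odef unfolding SP_def .
      have g1: "cj' + 1 \<le> L_H outm + d*n*k + n"
        using S1' KCc' e1 cdef' by linarith
      have g2: "ops' + 2*K \<le> (d+2)*n*k + 4*K*n"
      proof -
        have S2'': "SP + 2*K*X \<le> (d+2)*k'*n + 4*K*n + K" using S2' e3 by simp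
        have KCo': "opsm + 1 = K + d*n + n" using KCo e5 K2 by simp
        have e2': "(d+2)*n*k = (d+2)*k'*n + d*n + 2*n" using e2 e5 by simp
        show ?thesis using S2'' KCo' e2' e4' odef' by linarith
      qed
      show "cj' + 1 \<le> L_H outm + d*n*k + n \<and> ops' + 2*2^d \<le> (d+2)*n*k + 4*2^d*n"
        using g1 g2 unfolding K_def by simp
    qed
    have fsj: "\<And>j. j < K \<Longrightarrow> fst ` set (map fst rs ! j) = set (P ! j)"
    proof -
      fix j assume jK: "j < K"
      have e: "set (map fst (oj j)) = set (P ! j)" using IP[OF jK] by blast
      show "fst ` set (map fst rs ! j) = set (P ! j)" using e ssj[OF jK] by simp
    qed
    have setout: "set (map fst outm) = set xs"
    proof -
      have "set (map fst outm) = (\<Union>j<2^d. fst ` set (map fst rs ! j))" using KC by blast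
      also have "\<dots> = (\<Union>j<K. set (P ! j))" using fsj unfolding K_def by auto
      finally show ?thesis using setx by simp
    qed
    have lenout: "length outm = length xs" using KC lenm n_def by simp
    have och: "ochain [] outm" using KC by blast
    have M: "\<forall>k. 1 \<le> n \<longrightarrow> n \<le> (2^d)^k \<longrightarrow>
       sum_list (map (fst \<circ> snd) rs) + cm + 1 \<le> L_H outm + d*n*k + n \<and>
       1 + n + sum_list (map (snd \<circ> snd) rs) + opsm + 2*2^d \<le> (d+2)*n*k + 4*2^d*n"
      using main[of "sum_list (map (fst \<circ> snd) rs) + cm" "1 + n + sum_list (map (snd \<circ> snd) rs) + opsm"]
        csum psum by simp
    show ?thesis
      unfolding msprop_def Let_def ms fst_conv snd_conv
      using setout lenout och M n2 False unfolding n_def by (cases xs) simp_all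
  qed
qed




lemma lchain_sorted: "lchain s r \<Longrightarrow> sorted_wrt ord_class.lexordp (s # map fst r)"
proof (induction r arbitrary: s)
  case Nil then show ?case by simp
next
  case (Cons a r)
  obtain t h where a: "a = (t, h)" by (cases a)
  have "\<forall>y\<in>set (map fst r). ord_class.lexordp t y" using Cons.prems a lchain_less[of t r] by auto
  then show ?case using Cons a by (auto intro: lexordp_trans)
qed

lemma lcp_ok_Cons2: "lcp_array_ok (x # y # r) = (snd y = lcp (fst x) (fst y) \<and> lcp_array_ok (y # r))"
  unfolding lcp_array_ok_def
proof (intro iffI conjI allI impI)
  assume A: "\<forall>i. 0 < i \<and> i < length (x # y # r) \<longrightarrow>
      snd ((x # y # r) ! i) = lcp (fst ((x # y # r) ! (i - 1))) (fst ((x # y # r) ! i))"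
  show "snd y = lcp (fst x) (fst y)" using A[rule_format, of 1] by simp
  fix i assume i: "0 < i \<and> i < length (y # r)"
  then show "snd ((y # r) ! i) = lcp (fst ((y # r) ! (i - 1))) (fst ((y # r) ! i))"
    using A[rule_format, of "Suc i"] by (cases i) auto
next
  fix i assume B: "snd y = lcp (fst x) (fst y) \<and> (\<forall>i. 0 < i \<and> i < length (y # r) \<longrightarrow>
      snd ((y # r) ! i) = lcp (fst ((y # r) ! (i - 1))) (fst ((y # r) ! i)))"
    and i: "0 < i \<and> i < length (x # y # r)"
  show "snd ((x # y # r) ! i) = lcp (fst ((x # y # r) ! (i - 1))) (fst ((x # y # r) ! i))"
  proof (cases "i = 1")
    case True then show ?thesis using B by simp
  next
    case False
    then obtain i' where i': "i = Suc i'" "0 < i'" using i by (cases i) auto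
    then show ?thesis using B[THEN conjunct2, rule_format, of i'] i by (cases i') auto
  qed
qed

lemma lchain_lcp_ok: "lchain s r \<Longrightarrow> lcp_array_ok ((s, h0) # r)"
proof (induction r arbitrary: s h0)
  case Nil then show ?case by (simp add: lcp_array_ok_def)
next
  case (Cons a r)
  obtain t h where a: "a = (t, h)" by (cases a)
  then show ?case using Cons by (simp add: lcp_ok_Cons2)
qed

lemma ochain_sorts:
  assumes "ochain [] out" "set (map fst out) = S" shows "sorts_with_lcp S out"
proof (cases out)
  case Nil then show ?thesis using assms by (simp add: sorts_with_lcp_def lcp_array_ok_def)
next
  case (Cons a r)
  obtain s h where a: "a = (s, h)" by (cases a)
  have lc: "lchain s r" using assms Cons a by simp
  have "sorted_wrt ord_class.lexordp (map fst out)" using lchain_sorted[OF lc] Cons a by simp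
  moreover have "lcp_array_ok out" using lchain_lcp_ok[OF lc, of h] Cons a by simp
  ultimately show ?thesis using assms unfolding sorts_with_lcp_def by simp
qed

lemma zt_prefix: "prefix (zt s) (zt u) \<Longrightarrow> s = u"
proof (induction s arbitrary: u)
  case Nil
  show ?case
  proof (cases u)
    case Nil then show ?thesis by simp
  next
    case (Cons b u') then show ?thesis using Nil.prems by (simp add: zt_def)
  qed
next
  case (Cons a s)
  show ?case
  proof (cases u)
    case Nil then show ?thesis using Cons.prems by (simp add: zt_def)
  next
    case (Cons b u')
    then have "a = b" "prefix (zt s) (zt u')" using Cons.prems by (simp_all add: zt_def)
    then show ?thesis using Cons.IH Cons by simp
  qed
qed

lemma lcp_le_len: "lcp a b \<le> length a"
proof (induction a arbitrary: b)
  case Nil then show ?case by simp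
next
  case (Cons x a) then show ?case by (cases b) auto
qed

lemma take_lcp: "m \<le> lcp a b \<Longrightarrow> take m a = take m b"
proof (induction a arbitrary: b m)
  case Nil then show ?case by simp
next
  case (Cons x a)
  show ?case
  proof (cases b)
    case Nil then show ?thesis using Cons.prems by simp
  next
    case (Cons y b')
    show ?thesis
    proof (cases m)
      case 0 then show ?thesis by simp
    next
      case (Suc m')
      then have "x = y" "m' \<le> lcp a b'" using Cons.prems \<open>b = y # b'\<close> by (auto split: if_splits)
      then show ?thesis using Cons.IH \<open>b = y # b'\<close> Suc by simp
    qed
  qed
qed

lemma dpl_ge:
  assumes "s \<in> S" "t \<in> S" "t \<noteq> s"
  shows "lcp t s \<le> dist_prefix_len S s"
proof -
  let ?P = "\<lambda>m. \<forall>u\<in>S. u \<noteq> s \<longrightarrow> \<not> prefix (take m (zt s)) (zt u)"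
  have "?P (length (zt s))" using zt_prefix by auto
  then have P: "?P (dist_prefix_len S s)" unfolding dist_prefix_len_def by (rule LeastI)
  show ?thesis
  proof (rule ccontr)
    assume "\<not> ?thesis"
    then have m: "dist_prefix_len S s < lcp t s" by simp
    define m where "m = dist_prefix_len S s"
    have "lcp t s \<le> length s" using lcp_le_len[of s t] lcp_sym by metis
    then have ms: "m < length s" using m m_def by simp
    have "take m (zt s) = map Some (take m s)" using ms by (simp add: zt_def take_map)
    also have "take m s = take m t" using take_lcp[of m t s] m m_def by simp
    finally have "take m (zt s) = map Some (take m t)" .
    moreover have "prefix (map Some (take m t)) (zt t)"
      unfolding zt_def by (metis prefix_append take_is_prefix take_map)
    ultimately show False using P assms m_def by auto
  qed
qed

lemma lchain_sum:
  assumes "lchain p r" "p \<in> S" "set (map fst r) \<subseteq> S"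
  shows "sum_list (map snd r) \<le> (\<Sum>s\<in>set (map fst r). dist_prefix_len S s)"
  using assms
proof (induction r arbitrary: p)
  case Nil then show ?case by simp
next
  case (Cons a r)
  obtain s h where a: "a = (s, h)" by (cases a)
  have ps: "ord_class.lexordp p s" "h = lcp p s" "lchain s r" using Cons.prems a by auto
  have "p \<noteq> s" using ps lexordp_irreflexive' by metis
  then have h: "h \<le> dist_prefix_len S s" using dpl_ge[of s S p] ps Cons.prems a by auto
  have "s \<notin> set (map fst r)" using lchain_less[OF ps(3)] lexordp_irreflexive' by fastforce
  moreover have "sum_list (map snd r) \<le> (\<Sum>s\<in>set (map fst r). dist_prefix_len S s)"
    using Cons.IH[OF ps(3)] Cons.prems a by auto
  ultimately show ?case using h a by simp
qed

lemma LH_le_D: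
  assumes "ochain [] out" "set (map fst out) = S"
  shows "L_H out \<le> dist_prefix_size S"
proof (cases out)
  case Nil then show ?thesis by (simp add: L_H_def)
next
  case (Cons a r)
  obtain s h where a: "a = (s, h)" by (cases a)
  have "lchain s r" using assms Cons a by simp
  then have "sum_list (map snd r) \<le> (\<Sum>t\<in>set (map fst r). dist_prefix_len S t)"
    using lchain_sum[of s r S] assms Cons a by auto
  also have "\<dots> \<le> (\<Sum>t\<in>S. dist_prefix_len S t)"
    using assms Cons a by (intro sum_mono2) auto
  finally show ?thesis using Cons a by (simp add: L_H_def dist_prefix_size_def)
qed




lemma pow_ceil_log:
  fixes K n :: nat
  assumes "K \<ge> 2" "n \<ge> 1"
  shows "n \<le> K ^ nat \<lceil>log (real K) (real n)\<rceil>"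
proof -
  let ?r = "log (real K) (real n)"
  have r0: "?r \<ge> 0" using assms by simp
  have "real n = real K powr ?r" using assms by simp
  also have "\<dots> \<le> real K powr real (nat \<lceil>?r\<rceil>)"
  proof -
    have K1: "1 < real K" using assms by simp
    have "real (nat \<lceil>?r\<rceil>) = real_of_int \<lceil>?r\<rceil>" using r0 by simp
    then have "?r \<le> real (nat \<lceil>?r\<rceil>)" using le_of_int_ceiling[of ?r] by simp
    then show ?thesis using powr_le_cancel_iff[OF K1] by simp
  qed
  also have "\<dots> = real K ^ nat \<lceil>?r\<rceil>" by (rule powr_realpow) (use assms in simp)
  finally show ?thesis by (metis of_nat_le_iff of_nat_power)
qed

lemma part1:
  fixes xs :: "'a::linorder list list"
  assumes d: "d \<ge> 1" and xs: "distinct xs" "xs \<noteq> []"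
  shows "sorts_with_lcp (set xs) (fst (msort d xs)) \<and>
    real (msort_comparisons d xs)
      < real (L_H (fst (msort d xs)))
        + real (length xs) * real_of_int \<lceil>log (real ((2::nat)^d)) (real (length xs))\<rceil> * log 2 (real ((2::nat)^d))
        + real (length xs) + real_of_int \<lceil>(real (length xs) - 1) / (real ((2::nat)^d) - 1)\<rceil>"
proof -
  define n where "n = length xs"
  define K where "K = (2::nat)^d"
  define out where "out = fst (msort d xs)"
  define c where "c = msort_comparisons d xs"
  have n1: "n \<ge> 1" using xs n_def by (cases xs) auto
  have K2: "K \<ge> 2" using d unfolding K_def by (simp add: self_le_power)
  have P: "msprop d xs" by (rule msort_prop[OF d xs(1)])
  define k where "k = nat \<lceil>log (real K) (real n)\<rceil>"
  have nk: "n \<le> K ^ k" unfolding k_def by (rule pow_ceil_log[OF K2 n1])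
  have props: "set (map fst out) = set xs" "ochain [] out"
    "c + 1 \<le> L_H out + d * n * k + n"
    using P nk n1 unfolding msprop_def Let_def out_def c_def msort_comparisons_def n_def K_def by auto
  have sw: "sorts_with_lcp (set xs) out" using ochain_sorts props by blast
  have lg0: "log (real K) (real n) \<ge> 0" using K2 n1 by simp
  have ck: "real_of_int \<lceil>log (real K) (real n)\<rceil> = real k" using lg0 unfolding k_def by simp
  have l2: "log 2 (real K) = real d" unfolding K_def by simp
  have cl: "real_of_int \<lceil>(real n - 1) / (real K - 1)\<rceil> \<ge> 0"
  proof -
    have "real n - 1 \<ge> 0" "real K - 1 \<ge> 0" using n1 K2 by simp_all
    then have "(real n - 1) / (real K - 1) \<ge> 0" by simp
    then show ?thesis using le_of_int_ceiling[of "(real n - 1) / (real K - 1)"] by linarith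
  qed
  have "real c + 1 \<le> real (L_H out) + real d * real n * real k + real n"
    using props(3) by (metis of_nat_add of_nat_le_iff of_nat_mult of_nat_1)
  then have "real c < real (L_H out) + real n * real k * real d + real n + real_of_int \<lceil>(real n - 1) / (real K - 1)\<rceil>"
  proof -
    have "real d * real n * real k = real n * real k * real d" by (simp add: algebra_simps)
    then show ?thesis using cl \<open>real c + 1 \<le> _\<close> by linarith
  qed
  then show ?thesis using sw ck l2 unfolding out_def c_def n_def K_def by simp
qed


lemma part2:
  assumes d: "d \<ge> 1"
  shows "\<exists>C :: real. \<forall>xs :: 'a::linorder list list. distinct xs \<and> length xs \<ge> 2 \<longrightarrow>
            real (msort_time d xs)
              \<le> C * (real (dist_prefix_size (set xs)) + real (length xs) * log 2 (real (length xs)))"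
proof (intro exI allI impI)
  fix xs :: "'a list list"
  assume xs: "distinct xs \<and> length xs \<ge> 2"
  define n where "n = length xs"
  define K where "K = (2::nat)^d"
  define out where "out = fst (msort d xs)"
  define c where "c = fst (snd (msort d xs))"
  define ops where "ops = snd (snd (msort d xs))"
  define D where "D = dist_prefix_size (set xs)"
  define Lg where "Lg = log 2 (real n)"
  have n2: "n \<ge> 2" using xs n_def by simp
  have K2: "K \<ge> 2" using d unfolding K_def by (simp add: self_le_power)
  have P: "msprop d xs" using msort_prop[OF d] xs by blast
  define k where "k = nat \<lceil>log (real (2::nat)) (real n)\<rceil>"
  have nk2: "n \<le> 2 ^ k" unfolding k_def by (rule pow_ceil_log) (use n2 in auto)
  have "(2::nat) ^ k \<le> K ^ k" using K2 by (simp add: power_mono)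
  then have nk: "n \<le> (2^d) ^ k" using nk2 K_def by simp
  have props: "set (map fst out) = set xs" "ochain [] out"
    "c + 1 \<le> L_H out + d * n * k + n" "ops + 2 * 2^d \<le> (d+2) * n * k + 4 * 2^d * n"
    using P nk n2 unfolding msprop_def Let_def out_def c_def ops_def n_def by auto
  have LD: "L_H out \<le> D" unfolding D_def using LH_le_D[OF props(2) props(1)] .
  have tnat: "msort_time d xs \<le> D + d * n * k + n + (d+2) * n * k + 4 * K * n"
    using props(3,4) LD unfolding msort_time_def c_def[symmetric] ops_def[symmetric] K_def by linarith
  have A: "real (msort_time d xs) \<le> real D + (2 * real d + 2) * (real n * real k) + (1 + 4 * real K) * real n"
  proof -
    have "real (msort_time d xs) \<le> real (D + d * n * k + n + (d+2) * n * k + 4 * K * n)"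
      using tnat by (simp only: of_nat_le_iff)
    also have "\<dots> = real D + (2 * real d + 2) * (real n * real k) + (1 + 4 * real K) * real n"
      by (simp add: algebra_simps)
    finally show ?thesis .
  qed
  have Lg1: "Lg \<ge> 1" unfolding Lg_def using n2 by simp
  have kk: "real k \<le> 2 * Lg"
  proof -
    have r0: "log 2 (real n) \<ge> 0" using n2 by simp
    have "real k = real_of_int \<lceil>log 2 (real n)\<rceil>" unfolding k_def using r0 by simp
    also have "\<dots> \<le> log 2 (real n) + 1" by linarith
    finally show ?thesis using Lg1 Lg_def by simp
  qed
  define N where "N = real n * Lg"
  have N0: "N \<ge> 0" unfolding N_def using Lg1 by simp
  have B: "(2 * real d + 2) * (real n * real k) \<le> (2 * real d + 2) * (2 * N)"
  proof -
    have "real n * real k \<le> real n * (2 * Lg)" using kk by (intro mult_left_mono) auto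
    then show ?thesis unfolding N_def by (intro mult_left_mono) (auto simp: algebra_simps)
  qed
  have C1: "(1 + 4 * real K) * real n \<le> (1 + 4 * real K) * N"
  proof -
    have "real n \<le> real n * Lg" using Lg1 by (simp add: mult_le_cancel_left1)
    then show ?thesis unfolding N_def by (intro mult_left_mono) auto
  qed
  have E: "real D \<le> (4 * real d + 5 + 4 * real K) * real D"
  proof -
    have "1 * real D \<le> (4 * real d + 5 + 4 * real K) * real D" by (intro mult_right_mono) auto
    then show ?thesis by simp
  qed
  have F: "(2 * real d + 2) * (2 * N) + (1 + 4 * real K) * N = (4 * real d + 5 + 4 * real K) * N"
    by (simp add: algebra_simps)
  have G: "(4 * real d + 5 + 4 * real K) * (real D + N) = (4 * real d + 5 + 4 * real K) * real D + (4 * real d + 5 + 4 * real K) * N"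
    by (simp add: distrib_left)
  have "real (msort_time d xs) \<le> (4 * real d + 5 + 4 * real K) * (real D + N)"
    using A B C1 E F G by linarith
  then show "real (msort_time d xs)
      \<le> (4 * real d + 5 + 4 * real (2^d::nat)) * (real (dist_prefix_size (set xs)) + real (length xs) * log 2 (real (length xs)))"
    unfolding N_def Lg_def D_def n_def K_def .
qed


theorem mainTheorem5:
  fixes d :: nat
  assumes "d \<ge> 1"
  shows "(\<forall>xs :: 'a::linorder list list. distinct xs \<and> xs \<noteq> [] \<longrightarrow>
            (let n = length xs; K = (2::nat) ^ d; out = fst (msort d xs) in
             sorts_with_lcp (set xs) out \<and>
             real (msort_comparisons d xs)
               < real (L_H out)
                 + real n * real_of_int \<lceil>log (real K) (real n)\<rceil> * log 2 (real K)
                 + real n + real_of_int \<lceil>(real n - 1) / (real K - 1)\<rceil>))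
       \<and> (\<exists>C :: real. \<forall>xs :: 'a list list. distinct xs \<and> length xs \<ge> 2 \<longrightarrow>
            real (msort_time d xs)
              \<le> C * (real (dist_prefix_size (set xs)) + real (length xs) * log 2 (real (length xs))))"
proof (rule conjI)
  show "\<forall>xs :: 'a::linorder list list. distinct xs \<and> xs \<noteq> [] \<longrightarrow>
            (let n = length xs; K = (2::nat) ^ d; out = fst (msort d xs) in
             sorts_with_lcp (set xs) out \<and>
             real (msort_comparisons d xs)
               < real (L_H out)
                 + real n * real_of_int \<lceil>log (real K) (real n)\<rceil> * log 2 (real K)
                 + real n + real_of_int \<lceil>(real n - 1) / (real K - 1)\<rceil>)"
    using part1[OF assms] unfolding Let_def by blast
next
  show "\<exists>C :: real. \<forall>xs :: 'a list list. distinct xs \<and> length xs \<ge> 2 \<longrightarrow>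
            real (msort_time d xs)
              \<le> C * (real (dist_prefix_size (set xs)) + real (length xs) * log 2 (real (length xs)))"
    by (rule part2[OF assms])
qed

end
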